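(* Let $G$ be a finite group, $\varphi\in\mathrm{Aut}(G)$, and $U$ a subgroup with $\Delta(G,\varphi)\leq U\leq G\times G$. Suppose that for some $i\in\{1,2\}$ we have (i) $k_i(U)\cap G'\neq 1$, and (ii) $k_i(U)\leq Z(G)$. Then $U$ is not extensible.
   Context: $\Delta(G,\varphi)=\{(g,\varphi(g)):g\in G\}$. For $U\leq G\times G$: $k_1(U)=\{g:(g,1)\in U\}$, $k_2(U)=\{h:(1,h)\in U\}$; such $U$ is a subdirect product of $G$ and $G$. $G'$ is the commutator subgroup, $Z(G)$ the center. An abelian group $A$ satisfies the Hypothesis (with set of primes $\pi$) if there is a unique set of primes $\pi$ such that for every $n\in\mathbb{N}$ the $n$-torsion part of $A$ is cyclic of order $n_\pi$ (the $\pi$-part of $n$). $U$ is $A$-extensible if every homomorphism $U\to A$ extends to a homomorphism $G\times G\to A$; $U$ is extensible if it is $A$-extensible for every abelian group $A$ satisfying the Hypothesis. *)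

theory Defs
  imports "HOL-Algebra.Algebra" "HOL-Computational_Algebra.Primes" "HOL-Analysis.Analysis"
begin

definition group_center :: "('a, 'b) monoid_scheme \<Rightarrow> 'a set" where
  "group_center G = {z \<in> carrier G. \<forall>g \<in> carrier G. z \<otimes>\<^bsub>G\<^esub> g = g \<otimes>\<^bsub>G\<^esub> z}"

definition twisted_diag :: "('a, 'b) monoid_scheme \<Rightarrow> ('a \<Rightarrow> 'a) \<Rightarrow> ('a \<times> 'a) set" where
  "twisted_diag G \<phi> = {(g, \<phi> g) | g. g \<in> carrier G}"

definition k1 :: "('a, 'b) monoid_scheme \<Rightarrow> ('a \<times> 'a) set \<Rightarrow> 'a set" where
  "k1 G U = {g \<in> carrier G. (g, \<one>\<^bsub>G\<^esub>) \<in> U}"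

definition k2 :: "('a, 'b) monoid_scheme \<Rightarrow> ('a \<times> 'a) set \<Rightarrow> 'a set" where
  "k2 G U = {h \<in> carrier G. (\<one>\<^bsub>G\<^esub>, h) \<in> U}"

definition pi_part :: "nat set \<Rightarrow> nat \<Rightarrow> nat" where
  "pi_part \<pi> n = (\<Prod>p \<in> prime_factors n \<inter> \<pi>. p ^ multiplicity p n)"

definition torsion_part :: "('c, 'd) monoid_scheme \<Rightarrow> nat \<Rightarrow> 'c set" where
  "torsion_part A n = {a \<in> carrier A. a [^]\<^bsub>A\<^esub> n = \<one>\<^bsub>A\<^esub>}"

definition cyclic_of_order :: "('c, 'd) monoid_scheme \<Rightarrow> 'c set \<Rightarrow> nat \<Rightarrow> bool" where
  "cyclic_of_order A T m \<longleftrightarrow> finite T \<and> card T = m \<and>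
     (\<exists>g \<in> T. T = {g [^]\<^bsub>A\<^esub> (k::nat) | k. True})"

definition satisfies_hypothesis :: "('c, 'd) monoid_scheme \<Rightarrow> bool" where
  "satisfies_hypothesis A \<longleftrightarrow>
     (\<exists>!\<pi>::nat set. (\<forall>p \<in> \<pi>. Factorial_Ring.prime p) \<and>
        (\<forall>n::nat. n \<ge> 1 \<longrightarrow> cyclic_of_order A (torsion_part A n) (pi_part \<pi> n)))"

definition A_extensible :: "('a, 'b) monoid_scheme \<Rightarrow> ('a \<times> 'a) set \<Rightarrow> ('c, 'd) monoid_scheme \<Rightarrow> bool" where
  "A_extensible G U A \<longleftrightarrow>
     (\<forall>f \<in> hom ((G \<times>\<times> G)\<lparr>carrier := U\<rparr>) A.
        \<exists>F \<in> hom (G \<times>\<times> G) A. \<forall>u \<in> U. F u = f u)"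

text \<open>Extensibility, with the abelian groups A ranging over groups whose elements
  live in the type 'c (the witness type is fixed in the statement).\<close>
definition extensible :: "'c itself \<Rightarrow> ('a, 'b) monoid_scheme \<Rightarrow> ('a \<times> 'a) set \<Rightarrow> bool" where
  "extensible (_::'c itself) G U \<longleftrightarrow>
     (\<forall>A :: 'c monoid. comm_group A \<and> satisfies_hypothesis A \<longrightarrow> A_extensible G U A)"

end

theory Submission
  imports Defs
begin

definition RU :: "complex monoid" where
  "RU = \<lparr>carrier = {z. \<exists>n>0. z ^ n = 1}, monoid.mult = (*), monoid.one = 1\<rparr>"

lemma RU_simps [simp]: "carrier RU = {z. \<exists>n>0. z ^ n = 1}" "x \<otimes>\<^bsub>RU\<^esub> y = x * y" "\<one>\<^bsub>RU\<^esub> = 1"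
  by (simp_all add: RU_def)

lemma RU_pow [simp]: "x [^]\<^bsub>RU\<^esub> (n::nat) = x ^ n"
  by (induct n) (simp_all add: mult.commute)

lemma RU_closed: assumes "x ^ n = 1" "n > 0" shows "x \<in> carrier RU"
  using assms by auto

lemma RU_comm_group: "comm_group RU"
proof (rule comm_groupI)
  fix x y assume "x \<in> carrier RU" "y \<in> carrier RU"
  then obtain n m where "n > 0" "x ^ n = 1" "m > 0" "y ^ m = 1" by auto
  have "(x * y) ^ (n * m) = (x ^ n) ^ m * (y ^ m) ^ n"
    by (simp add: power_mult_distrib flip: power_mult) (simp add: mult.commute)
  then have "(x * y) ^ (n * m) = 1" using \<open>x ^ n = 1\<close> \<open>y ^ m = 1\<close> by simp
  then show "x \<otimes>\<^bsub>RU\<^esub> y \<in> carrier RU" using \<open>n>0\<close> \<open>m>0\<close> by (auto intro!: exI[of _ "n*m"])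
next
  fix x assume "x \<in> carrier RU"
  then obtain n where n: "n > 0" "x ^ n = 1" by auto
  then have "x ^ (n - 1) * x = 1" by (metis Suc_diff_1 power_Suc2)
  moreover have "(x ^ (n - 1)) ^ n = 1"
    using n by (metis power_mult power_mult_distrib mult.commute power_one)
  ultimately show "\<exists>y\<in>carrier RU. y \<otimes>\<^bsub>RU\<^esub> x = \<one>\<^bsub>RU\<^esub>" using n by auto
qed (auto simp: mult_ac)

lemma RU_roots: "n > 0 \<Longrightarrow> a \<in> carrier RU \<Longrightarrow> \<exists>b\<in>carrier RU. b ^ n = a"
proof -
  assume n: "n > 0" and a: "a \<in> carrier RU"
  then obtain m where m: "m > 0" "a ^ m = 1" by auto
  then have "a \<noteq> 0" by (metis power_0_left zero_neq_one not_gr0)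
  define b where "b = exp (Ln a / of_nat n)"
  have "b ^ n = exp (of_nat n * (Ln a / of_nat n))" unfolding b_def by (rule exp_of_nat_mult[symmetric])
  also have "\<dots> = a" using n \<open>a \<noteq> 0\<close> by simp
  finally have bn: "b ^ n = a" .
  have "b ^ (n * m) = 1" using bn m by (simp add: power_mult)
  then have "b \<in> carrier RU" using n m by (auto intro!: exI[of _ "n*m"])
  then show ?thesis using bn by blast
qed

lemma torsion_RU: "n \<ge> 1 \<Longrightarrow> torsion_part RU n = {z. z ^ n = 1}"
  unfolding torsion_part_def by (force simp: Suc_le_eq)

lemma pi_part_primes: "n \<ge> 1 \<Longrightarrow> pi_part {p. Factorial_Ring.prime p} n = n"
proof -
  assume "n \<ge> 1"
  have "prime_factors n \<inter> {p. Factorial_Ring.prime p} = prime_factors n" by auto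
  then show ?thesis unfolding pi_part_def using \<open>n \<ge> 1\<close>
    by (simp add: prod_prime_factors)
qed

lemma pi_part_prime: "Factorial_Ring.prime p \<Longrightarrow> pi_part \<pi> p = (if p \<in> \<pi> then p else 1)"
  unfolding pi_part_def by (simp add: prime_prime_factors multiplicity_self)

lemma cyclic_RU: assumes "n \<ge> 1" shows "cyclic_of_order RU (torsion_part RU n) n"
proof -
  define g where "g = cis (2 * pi / real n)"
  have E: "{z::complex. z ^ n = 1} = {g ^ k | k. True}"
  proof
    show "{z::complex. z ^ n = 1} \<subseteq> {g ^ k | k. True}"
    proof
      fix z :: complex assume "z \<in> {z. z ^ n = 1}"
      then obtain k where "z = cis (2 * pi * real k / real n)"
        using Complex.bij_betw_roots_unity[of n] assms unfolding bij_betw_def by auto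
      also have "\<dots> = g ^ k" unfolding g_def Complex.DeMoivre by (rule arg_cong[where f=cis]) simp
      finally show "z \<in> {g ^ k | k. True}" by auto
    qed
  next
    have "g ^ n = 1" unfolding g_def using assms by (simp add: Complex.DeMoivre)
    then show "{g ^ k | k. True} \<subseteq> {z::complex. z ^ n = 1}"
      by (auto simp: power_mult[symmetric] mult.commute[of _ n] power_mult)
  qed
  have gin: "g \<in> {z::complex. z ^ n = 1}" unfolding g_def using assms by (simp add: Complex.DeMoivre)
  have fc: "finite {z::complex. z ^ n = 1}" "card {z::complex. z ^ n = 1} = n"
    using assms by (auto intro: finite_roots_unity card_roots_unity_eq)
  have "\<exists>g\<in>{z::complex. z ^ n = 1}. {z::complex. z ^ n = 1} = {g [^]\<^bsub>RU\<^esub> (k::nat) | k. True}"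
    using gin E by (intro bexI[of _ g]) simp_all
  with fc show ?thesis unfolding cyclic_of_order_def torsion_RU[OF assms] by (intro conjI)
qed

lemma RU_hyp: "satisfies_hypothesis RU"
  unfolding satisfies_hypothesis_def
proof (rule ex1I[of _ "{p. Factorial_Ring.prime p}"])
  have "\<forall>n\<ge>1. cyclic_of_order RU (torsion_part RU n) (pi_part {p. Factorial_Ring.prime p} n)"
  proof (intro allI impI)
    fix n :: nat assume "n \<ge> 1"
    then show "cyclic_of_order RU (torsion_part RU n) (pi_part {p. Factorial_Ring.prime p} n)"
      using cyclic_RU[of n] pi_part_primes[of n] by simp
  qed
  then show "(\<forall>p\<in>{p. Factorial_Ring.prime p}. Factorial_Ring.prime (p::nat)) \<and> (\<forall>n\<ge>1. cyclic_of_order RU (torsion_part RU n) (pi_part {p. Factorial_Ring.prime p} n))"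
    by blast
next
  fix \<pi> assume h: "(\<forall>p\<in>\<pi>. Factorial_Ring.prime (p::nat)) \<and> (\<forall>n\<ge>1. cyclic_of_order RU (torsion_part RU n) (pi_part \<pi> n))"
  show "\<pi> = {p. Factorial_Ring.prime p}"
  proof (rule equalityI)
    show "\<pi> \<subseteq> {p. Factorial_Ring.prime p}" using h by blast
  next
    show "{p. Factorial_Ring.prime p} \<subseteq> \<pi>"
    proof
      fix p assume "p \<in> {p::nat. Factorial_Ring.prime p}"
      then have p: "Factorial_Ring.prime p" by simp
      then have p1: "p \<ge> 1" "p \<noteq> 1" using prime_gt_1_nat[of p] by auto
      have "cyclic_of_order RU (torsion_part RU p) (pi_part \<pi> p)" using h p1 by blast
      then have "card (torsion_part RU p) = pi_part \<pi> p" unfolding cyclic_of_order_def by blast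
      moreover have "card (torsion_part RU p) = p" using p1
        by (simp add: torsion_RU card_roots_unity_eq)
      ultimately have "pi_part \<pi> p = p" by simp
      then show "p \<in> \<pi>" using pi_part_prime[OF p, of \<pi>] p1 by (cases "p \<in> \<pi>") auto
    qed
  qed
qed

lemma RU_nonzero: "c \<in> carrier RU \<Longrightarrow> c \<noteq> 0"
proof -
  assume "c \<in> carrier RU"
  then obtain n where n: "n > 0" "c ^ n = 1" by auto
  show "c \<noteq> 0"
  proof
    assume "c = 0"
    with n show False by (simp add: power_0_left)
  qed
qed

lemma sub_pow_closed:
  assumes "subgroup H K" "y \<in> H" shows "y [^]\<^bsub>K\<^esub> (q::nat) \<in> H"
proof (induct q)
  case 0 show ?case unfolding nat_pow_0 by (rule subgroup.one_closed[OF assms(1)])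
next
  case (Suc q) show ?case unfolding nat_pow_Suc by (rule subgroup.m_closed[OF assms(1) Suc assms(2)])
qed

lemma RU_monoid: "monoid RU"
  using RU_comm_group unfolding comm_group_def group_def by blast

lemma RU_mult_closed: "a \<in> carrier RU \<Longrightarrow> b \<in> carrier RU \<Longrightarrow> a * b \<in> carrier RU"
  using monoid.m_closed[OF RU_monoid, of a b] by (simp only: RU_simps(2))

lemma RU_pow_closed: "a \<in> carrier RU \<Longrightarrow> a ^ n \<in> carrier RU"
proof -
  assume a: "a \<in> carrier RU"
  have "a [^]\<^bsub>RU\<^esub> n \<in> carrier RU" by (rule monoid.nat_pow_closed[OF RU_monoid a])
  then show ?thesis unfolding RU_pow .
qed

lemma hom_one_RU:
  assumes "ch \<in> hom L RU" "\<one>\<^bsub>L\<^esub> \<in> carrier L" "\<one>\<^bsub>L\<^esub> \<otimes>\<^bsub>L\<^esub> \<one>\<^bsub>L\<^esub> = \<one>\<^bsub>L\<^esub>"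
  shows "ch \<one>\<^bsub>L\<^esub> = 1"
proof -
  have "ch (\<one>\<^bsub>L\<^esub> \<otimes>\<^bsub>L\<^esub> \<one>\<^bsub>L\<^esub>) = ch \<one>\<^bsub>L\<^esub> \<otimes>\<^bsub>RU\<^esub> ch \<one>\<^bsub>L\<^esub>"
    using hom_mult[OF assms(1) assms(2) assms(2)] .
  then have "ch (\<one>\<^bsub>L\<^esub> \<otimes>\<^bsub>L\<^esub> \<one>\<^bsub>L\<^esub>) = ch \<one>\<^bsub>L\<^esub> * ch \<one>\<^bsub>L\<^esub>" by (simp only: RU_simps(2))
  then have e: "ch \<one>\<^bsub>L\<^esub> = ch \<one>\<^bsub>L\<^esub> * ch \<one>\<^bsub>L\<^esub>" by (metis assms(3))
  have "ch \<one>\<^bsub>L\<^esub> \<in> carrier RU" using hom_in_carrier[OF assms(1) assms(2)] .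
  then have "ch \<one>\<^bsub>L\<^esub> \<noteq> 0" by (rule RU_nonzero)
  with e show ?thesis using mult_cancel_left1 by blast
qed

lemma hom_pow_RU_gen:
  assumes "monoid L" "ch \<in> hom L RU" "y \<in> carrier L"
  shows "ch (y [^]\<^bsub>L\<^esub> (q::nat)) = ch y ^ q"
proof (induct q)
  case 0
  have "ch \<one>\<^bsub>L\<^esub> = 1"
    by (rule hom_one_RU[OF assms(2)]) (rule monoid.one_closed[OF assms(1)], rule monoid.l_one[OF assms(1) monoid.one_closed[OF assms(1)]])
  then show ?case by (simp only: nat_pow_0 power_0)
next
  case (Suc q)
  have c: "y [^]\<^bsub>L\<^esub> q \<in> carrier L" using monoid.nat_pow_closed[OF assms(1) assms(3)] .
  have "ch (y [^]\<^bsub>L\<^esub> Suc q) = ch (y [^]\<^bsub>L\<^esub> q \<otimes>\<^bsub>L\<^esub> y)"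
    by (simp only: nat_pow_Suc)
  also have "\<dots> = ch (y [^]\<^bsub>L\<^esub> q) \<otimes>\<^bsub>RU\<^esub> ch y"
    by (rule hom_mult[OF assms(2) c assms(3)])
  also have "\<dots> = ch y ^ q * ch y" using Suc by (simp only: RU_simps)
  finally show ?case by (simp only: power_Suc2)
qed

lemma hom_pow_RU:
  assumes "group K" "subgroup H K" "ch \<in> hom (K\<lparr>carrier := H\<rparr>) RU" "y \<in> H"
  shows "ch (y [^]\<^bsub>K\<^esub> (q::nat)) = ch y ^ q"
proof -
  have g: "group (K\<lparr>carrier := H\<rparr>)" using group.subgroup_imp_group[OF assms(1,2)] .
  have "y [^]\<^bsub>K\<^esub> q = y [^]\<^bsub>K\<lparr>carrier := H\<rparr>\<^esub> q"
    using monoid.nat_pow_consistent[OF group.is_monoid[OF assms(1)]] .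
  moreover have "ch (y [^]\<^bsub>K\<lparr>carrier := H\<rparr>\<^esub> q) = ch y ^ q"
    by (rule hom_pow_RU_gen[OF group.is_monoid[OF g] assms(3)]) (use assms(4) in simp)
  ultimately show ?thesis by metis
qed

lemma comm_swap4:
  assumes "comm_group K" "a \<in> carrier K" "b \<in> carrier K" "c \<in> carrier K" "d \<in> carrier K"
  shows "(a \<otimes>\<^bsub>K\<^esub> b) \<otimes>\<^bsub>K\<^esub> (c \<otimes>\<^bsub>K\<^esub> d) = (a \<otimes>\<^bsub>K\<^esub> c) \<otimes>\<^bsub>K\<^esub> (b \<otimes>\<^bsub>K\<^esub> d)"
proof -
  interpret K: comm_group K by fact
  show ?thesis using assms(2-5) by (simp add: K.m_ac)
qed

lemma sub_hom_mult:
  assumes "ch \<in> hom (K\<lparr>carrier := H\<rparr>) RU" "h1 \<in> H" "h2 \<in> H"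
  shows "ch (h1 \<otimes>\<^bsub>K\<^esub> h2) = ch h1 * ch h2"
proof -
  have "ch (h1 \<otimes>\<^bsub>K\<lparr>carrier := H\<rparr>\<^esub> h2) = ch h1 \<otimes>\<^bsub>RU\<^esub> ch h2"
    by (rule hom_mult[OF assms(1)]) (use assms(2,3) in simp_all)
  then show ?thesis by simp
qed

lemma sub_hom_carrier:
  assumes "ch \<in> hom (K\<lparr>carrier := H\<rparr>) RU" "h \<in> H"
  shows "ch h \<in> carrier RU"
  by (rule hom_in_carrier[OF assms(1)]) (use assms(2) in simp)

lemma sub_hom_one:
  assumes "group K" "subgroup H K" "ch \<in> hom (K\<lparr>carrier := H\<rparr>) RU"
  shows "ch \<one>\<^bsub>K\<^esub> = 1"
proof -
  have "ch \<one>\<^bsub>K\<lparr>carrier := H\<rparr>\<^esub> = 1"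
  proof (rule hom_one_RU[OF assms(3)])
    show "\<one>\<^bsub>K\<lparr>carrier := H\<rparr>\<^esub> \<in> carrier (K\<lparr>carrier := H\<rparr>)"
      using subgroup.one_closed[OF assms(2)] by simp
    show "\<one>\<^bsub>K\<lparr>carrier := H\<rparr>\<^esub> \<otimes>\<^bsub>K\<lparr>carrier := H\<rparr>\<^esub> \<one>\<^bsub>K\<lparr>carrier := H\<rparr>\<^esub> = \<one>\<^bsub>K\<lparr>carrier := H\<rparr>\<^esub>"
      using group.is_monoid[OF assms(1)] monoid.l_one monoid.one_closed by fastforce
  qed
  then show ?thesis by simp
qed

lemma ext_wd0:
  assumes K: "comm_group K"
    and H: "subgroup H K" and ch: "ch \<in> hom (K\<lparr>carrier := H\<rparr>) RU"
    and x: "x \<in> carrier K"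
    and cond: "\<And>t::nat. x [^]\<^bsub>K\<^esub> t \<in> H \<Longrightarrow> a ^ t = ch (x [^]\<^bsub>K\<^esub> t)"
    and h1: "h1 \<in> H" and h2: "h2 \<in> H" and j: "j2 \<le> j1"
    and eq: "h1 \<otimes>\<^bsub>K\<^esub> x [^]\<^bsub>K\<^esub> (j1::nat) = h2 \<otimes>\<^bsub>K\<^esub> x [^]\<^bsub>K\<^esub> (j2::nat)"
  shows "ch h1 * a ^ j1 = ch h2 * a ^ j2"
proof -
  interpret K: comm_group K by fact
  define d where "d = j1 - j2"
  have j1: "j1 = d + j2" using j unfolding d_def by simp
  have h1K: "h1 \<in> carrier K" and h2K: "h2 \<in> carrier K" using h1 h2 subgroup.subset[OF H] by auto
  have xd: "x [^]\<^bsub>K\<^esub> d \<in> carrier K" "x [^]\<^bsub>K\<^esub> j2 \<in> carrier K" using x by simp_all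
  have "x [^]\<^bsub>K\<^esub> j1 = x [^]\<^bsub>K\<^esub> d \<otimes>\<^bsub>K\<^esub> x [^]\<^bsub>K\<^esub> j2"
    unfolding j1 by (rule K.nat_pow_mult[OF x, symmetric])
  then have "(h1 \<otimes>\<^bsub>K\<^esub> x [^]\<^bsub>K\<^esub> d) \<otimes>\<^bsub>K\<^esub> x [^]\<^bsub>K\<^esub> j2 = h2 \<otimes>\<^bsub>K\<^esub> x [^]\<^bsub>K\<^esub> j2"
    using eq K.m_assoc[OF h1K xd] by simp
  then have e2: "h1 \<otimes>\<^bsub>K\<^esub> x [^]\<^bsub>K\<^esub> d = h2"
    using K.right_cancel[OF xd(2) K.m_closed[OF h1K xd(1)] h2K] by simp
  then have "x [^]\<^bsub>K\<^esub> d = inv\<^bsub>K\<^esub> h1 \<otimes>\<^bsub>K\<^esub> h2"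
    using K.inv_solve_left[OF xd(1) h1K h2K] by simp
  then have xdH: "x [^]\<^bsub>K\<^esub> d \<in> H"
    using subgroup.m_closed[OF H subgroup.m_inv_closed[OF H h1] h2] by simp
  have "ch h2 = ch h1 * ch (x [^]\<^bsub>K\<^esub> d)"
    using sub_hom_mult[OF ch h1 xdH] e2 by simp
  also have "\<dots> = ch h1 * a ^ d" using cond[OF xdH] by simp
  finally have "ch h2 = ch h1 * a ^ d" .
  then show ?thesis unfolding j1 by (simp add: power_add mult.assoc)
qed

lemma ext_wd:
  assumes K: "comm_group K"
    and H: "subgroup H K" and ch: "ch \<in> hom (K\<lparr>carrier := H\<rparr>) RU"
    and x: "x \<in> carrier K"
    and cond: "\<And>t::nat. x [^]\<^bsub>K\<^esub> t \<in> H \<Longrightarrow> a ^ t = ch (x [^]\<^bsub>K\<^esub> t)"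
    and h1: "h1 \<in> H" and h2: "h2 \<in> H"
    and eq: "h1 \<otimes>\<^bsub>K\<^esub> x [^]\<^bsub>K\<^esub> (j1::nat) = h2 \<otimes>\<^bsub>K\<^esub> x [^]\<^bsub>K\<^esub> (j2::nat)"
  shows "ch h1 * a ^ j1 = ch h2 * a ^ j2"
proof (cases "j2 \<le> j1")
  case True
  then show ?thesis using ext_wd0[OF K H ch x cond h1 h2 True eq] by blast
next
  case False
  then have "j1 \<le> j2" by simp
  then show ?thesis using ext_wd0[OF K H ch x cond h2 h1 _ eq[symmetric]] by simp
qed

lemma ext_step:
  assumes K: "comm_group K" "finite (carrier K)"
    and H: "subgroup H K" and ch: "ch \<in> hom (K\<lparr>carrier := H\<rparr>) RU"
    and x: "x \<in> carrier K" and a: "a \<in> carrier RU"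
    and cond: "\<And>t::nat. x [^]\<^bsub>K\<^esub> t \<in> H \<Longrightarrow> a ^ t = ch (x [^]\<^bsub>K\<^esub> t)"
  shows "\<exists>H' ch'. subgroup H' K \<and> H \<subseteq> H' \<and> x \<in> H' \<and> ch' \<in> hom (K\<lparr>carrier := H'\<rparr>) RU
           \<and> (\<forall>h\<in>H. ch' h = ch h) \<and> ch' x = a"
proof -
  interpret K: comm_group K by fact
  define H' where "H' = {y. \<exists>h (j::nat). h \<in> H \<and> y = h \<otimes>\<^bsub>K\<^esub> x [^]\<^bsub>K\<^esub> j}"
  define ch' where "ch' y = (SOME c. \<exists>h (j::nat). h \<in> H \<and> y = h \<otimes>\<^bsub>K\<^esub> x [^]\<^bsub>K\<^esub> j \<and> c = ch h * a ^ j)" for y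
  have HK: "\<And>h. h \<in> H \<Longrightarrow> h \<in> carrier K" using subgroup.subset[OF H] by auto
  have ch'_eq: "ch' (h \<otimes>\<^bsub>K\<^esub> x [^]\<^bsub>K\<^esub> j) = ch h * a ^ j" if h: "h \<in> H" for h and j :: nat
  proof -
    let ?P = "\<lambda>c. \<exists>h' (j'::nat). h' \<in> H \<and> h \<otimes>\<^bsub>K\<^esub> x [^]\<^bsub>K\<^esub> j = h' \<otimes>\<^bsub>K\<^esub> x [^]\<^bsub>K\<^esub> j' \<and> c = ch h' * a ^ j'"
    have "?P (ch h * a ^ j)" using h by blast
    then have "?P (SOME c. ?P c)" by (rule someI)
    then obtain h' j' where h': "h' \<in> H" "h \<otimes>\<^bsub>K\<^esub> x [^]\<^bsub>K\<^esub> j = h' \<otimes>\<^bsub>K\<^esub> x [^]\<^bsub>K\<^esub> j'"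
      and c: "(SOME c. ?P c) = ch h' * a ^ j'" by blast
    have "ch h * a ^ j = ch h' * a ^ j'" by (rule ext_wd[OF K(1) H ch x cond h h'(1) h'(2)])
    with c show ?thesis unfolding ch'_def by simp
  qed
  have H'K: "H' \<subseteq> carrier K" unfolding H'_def using HK x by auto
  have one: "\<one>\<^bsub>K\<^esub> \<otimes>\<^bsub>K\<^esub> x [^]\<^bsub>K\<^esub> (0::nat) = \<one>\<^bsub>K\<^esub>" by simp
  have xx: "\<one>\<^bsub>K\<^esub> \<otimes>\<^bsub>K\<^esub> x [^]\<^bsub>K\<^esub> (1::nat) = x" using x by simp
  have hh: "h \<otimes>\<^bsub>K\<^esub> x [^]\<^bsub>K\<^esub> (0::nat) = h" if "h \<in> H" for h using HK[OF that] by simp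
  have oneH: "\<one>\<^bsub>K\<^esub> \<in> H" by (rule subgroup.one_closed[OF H])
  have HH': "H \<subseteq> H'"
  proof
    fix h assume h: "h \<in> H"
    show "h \<in> H'" unfolding H'_def using h hh[OF h, symmetric] by blast
  qed
  have xH': "x \<in> H'" unfolding H'_def using xx[symmetric] oneH by blast
  have mult: "(h1 \<otimes>\<^bsub>K\<^esub> x [^]\<^bsub>K\<^esub> j1) \<otimes>\<^bsub>K\<^esub> (h2 \<otimes>\<^bsub>K\<^esub> x [^]\<^bsub>K\<^esub> j2)
      = (h1 \<otimes>\<^bsub>K\<^esub> h2) \<otimes>\<^bsub>K\<^esub> x [^]\<^bsub>K\<^esub> (j1 + j2)"
    if "h1 \<in> H" "h2 \<in> H" for h1 h2 and j1 j2 :: nat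
  proof -
    have "(h1 \<otimes>\<^bsub>K\<^esub> x [^]\<^bsub>K\<^esub> j1) \<otimes>\<^bsub>K\<^esub> (h2 \<otimes>\<^bsub>K\<^esub> x [^]\<^bsub>K\<^esub> j2)
      = (h1 \<otimes>\<^bsub>K\<^esub> h2) \<otimes>\<^bsub>K\<^esub> (x [^]\<^bsub>K\<^esub> j1 \<otimes>\<^bsub>K\<^esub> x [^]\<^bsub>K\<^esub> j2)"
      by (rule comm_swap4[OF K(1) HK[OF that(1)] K.nat_pow_closed[OF x] HK[OF that(2)] K.nat_pow_closed[OF x]])
    also have "x [^]\<^bsub>K\<^esub> j1 \<otimes>\<^bsub>K\<^esub> x [^]\<^bsub>K\<^esub> j2 = x [^]\<^bsub>K\<^esub> (j1 + j2)"
      by (rule K.nat_pow_mult[OF x])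
    finally show ?thesis .
  qed
  have ordx: "K.ord x \<ge> 1" by (rule K.ord_ge_1[OF K(2) x])
  have invx: "inv\<^bsub>K\<^esub> (h \<otimes>\<^bsub>K\<^esub> x [^]\<^bsub>K\<^esub> j) = inv\<^bsub>K\<^esub> h \<otimes>\<^bsub>K\<^esub> x [^]\<^bsub>K\<^esub> (j * (K.ord x - 1))"
    if h: "h \<in> H" for h and j :: nat
  proof (rule K.inv_equality)
    have "(inv\<^bsub>K\<^esub> h \<otimes>\<^bsub>K\<^esub> x [^]\<^bsub>K\<^esub> (j * (K.ord x - 1))) \<otimes>\<^bsub>K\<^esub> (h \<otimes>\<^bsub>K\<^esub> x [^]\<^bsub>K\<^esub> j)
       = (inv\<^bsub>K\<^esub> h \<otimes>\<^bsub>K\<^esub> h) \<otimes>\<^bsub>K\<^esub> (x [^]\<^bsub>K\<^esub> (j * (K.ord x - 1)) \<otimes>\<^bsub>K\<^esub> x [^]\<^bsub>K\<^esub> j)"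
      by (rule comm_swap4[OF K(1) K.inv_closed[OF HK[OF h]] K.nat_pow_closed[OF x] HK[OF h] K.nat_pow_closed[OF x]])
    also have "x [^]\<^bsub>K\<^esub> (j * (K.ord x - 1)) \<otimes>\<^bsub>K\<^esub> x [^]\<^bsub>K\<^esub> j = x [^]\<^bsub>K\<^esub> (j * (K.ord x - 1) + j)"
      by (rule K.nat_pow_mult[OF x])
    also have "j * (K.ord x - 1) + j = K.ord x * j"
    proof -
      obtain m where m: "K.ord x = Suc m" using ordx by (cases "K.ord x") auto
      show ?thesis unfolding m by simp
    qed
    also have "x [^]\<^bsub>K\<^esub> (K.ord x * j) = \<one>\<^bsub>K\<^esub>"
      using K.nat_pow_pow[OF x, of "K.ord x" j, symmetric] K.pow_ord_eq_1[OF x] by simp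
    finally show "(inv\<^bsub>K\<^esub> h \<otimes>\<^bsub>K\<^esub> x [^]\<^bsub>K\<^esub> (j * (K.ord x - 1))) \<otimes>\<^bsub>K\<^esub> (h \<otimes>\<^bsub>K\<^esub> x [^]\<^bsub>K\<^esub> j) = \<one>\<^bsub>K\<^esub>"
      using HK[OF h] by simp
  qed (rule K.m_closed[OF HK[OF h] K.nat_pow_closed[OF x]], rule K.m_closed[OF K.inv_closed[OF HK[OF h]] K.nat_pow_closed[OF x]])
  have subH': "subgroup H' K"
  proof (rule K.subgroupI)
    show "H' \<subseteq> carrier K" by (rule H'K)
    show "H' \<noteq> {}" using xH' by blast
  next
    fix y assume "y \<in> H'"
    then obtain h j where h: "h \<in> H" and y: "y = h \<otimes>\<^bsub>K\<^esub> x [^]\<^bsub>K\<^esub> (j::nat)" unfolding H'_def by blast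
    have "inv\<^bsub>K\<^esub> h \<in> H" by (rule subgroup.m_inv_closed[OF H h])
    then show "inv\<^bsub>K\<^esub> y \<in> H'" unfolding y invx[OF h] H'_def by blast
  next
    fix y z assume "y \<in> H'" "z \<in> H'"
    then obtain h1 j1 h2 j2 where h: "h1 \<in> H" "h2 \<in> H" and y: "y = h1 \<otimes>\<^bsub>K\<^esub> x [^]\<^bsub>K\<^esub> (j1::nat)"
      and z: "z = h2 \<otimes>\<^bsub>K\<^esub> x [^]\<^bsub>K\<^esub> (j2::nat)" unfolding H'_def by blast
    have "h1 \<otimes>\<^bsub>K\<^esub> h2 \<in> H" by (rule subgroup.m_closed[OF H h])
    then show "y \<otimes>\<^bsub>K\<^esub> z \<in> H'" unfolding y z mult[OF h] H'_def by blast
  qed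
  have hom': "ch' \<in> hom (K\<lparr>carrier := H'\<rparr>) RU"
  proof (rule homI)
    fix y assume "y \<in> carrier (K\<lparr>carrier := H'\<rparr>)"
    then obtain h j where h: "h \<in> H" and y: "y = h \<otimes>\<^bsub>K\<^esub> x [^]\<^bsub>K\<^esub> (j::nat)" unfolding H'_def by auto
    show "ch' y \<in> carrier RU" unfolding y ch'_eq[OF h]
      by (rule RU_mult_closed[OF sub_hom_carrier[OF ch h] RU_pow_closed[OF a]])
  next
    fix y z assume "y \<in> carrier (K\<lparr>carrier := H'\<rparr>)" "z \<in> carrier (K\<lparr>carrier := H'\<rparr>)"
    then obtain h1 j1 h2 j2 where h: "h1 \<in> H" "h2 \<in> H" and y: "y = h1 \<otimes>\<^bsub>K\<^esub> x [^]\<^bsub>K\<^esub> (j1::nat)"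
      and z: "z = h2 \<otimes>\<^bsub>K\<^esub> x [^]\<^bsub>K\<^esub> (j2::nat)" unfolding H'_def by auto
    have m: "h1 \<otimes>\<^bsub>K\<^esub> h2 \<in> H" by (rule subgroup.m_closed[OF H h])
    have "ch' (y \<otimes>\<^bsub>K\<^esub> z) = ch (h1 \<otimes>\<^bsub>K\<^esub> h2) * a ^ (j1 + j2)"
      unfolding y z mult[OF h] ch'_eq[OF m] ..
    also have "\<dots> = (ch h1 * a ^ j1) * (ch h2 * a ^ j2)"
      unfolding sub_hom_mult[OF ch h] by (simp add: power_add mult_ac)
    finally show "ch' (y \<otimes>\<^bsub>K\<lparr>carrier := H'\<rparr>\<^esub> z) = ch' y \<otimes>\<^bsub>RU\<^esub> ch' z"
      unfolding y z ch'_eq[OF h(1)] ch'_eq[OF h(2)] by simp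
  qed
  have "\<forall>h\<in>H. ch' h = ch h"
  proof
    fix h assume h: "h \<in> H"
    have "ch' (h \<otimes>\<^bsub>K\<^esub> x [^]\<^bsub>K\<^esub> (0::nat)) = ch h * a ^ 0" by (rule ch'_eq[OF h])
    then show "ch' h = ch h" using hh[OF h] by simp
  qed
  moreover have "ch' x = a"
  proof -
    have "ch' (\<one>\<^bsub>K\<^esub> \<otimes>\<^bsub>K\<^esub> x [^]\<^bsub>K\<^esub> (1::nat)) = ch \<one>\<^bsub>K\<^esub> * a ^ 1" by (rule ch'_eq[OF oneH])
    then show ?thesis using xx sub_hom_one[OF K.is_group H ch] by simp
  qed
  ultimately show ?thesis using subH' HH' xH' hom' by blast
qed

lemma ext_full:
  assumes K: "comm_group K" "finite (carrier K)"
  shows "subgroup H K \<Longrightarrow> ch \<in> hom (K\<lparr>carrier := H\<rparr>) RU \<Longrightarrow> \<exists>ch'\<in>hom K RU. \<forall>h\<in>H. ch' h = ch h"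
proof (induct "card (carrier K - H)" arbitrary: H ch rule: less_induct)
  case less
  interpret K: comm_group K by fact
  have H: "subgroup H K" and ch: "ch \<in> hom (K\<lparr>carrier := H\<rparr>) RU" by fact+
  show ?case
  proof (cases "H = carrier K")
    case True
    have "K\<lparr>carrier := H\<rparr> = K" unfolding True by simp
    then have "ch \<in> hom K RU" using ch by simp
    then show ?thesis by blast
  next
    case False
    then obtain x where x: "x \<in> carrier K" "x \<notin> H" using subgroup.subset[OF H] by blast
    define P where "P m = (0 < m \<and> x [^]\<^bsub>K\<^esub> m \<in> H)" for m :: nat
    have "K.ord x \<ge> 1" by (rule K.ord_ge_1[OF K(2) x(1)])
    moreover have "x [^]\<^bsub>K\<^esub> K.ord x \<in> H"
      using K.pow_ord_eq_1[OF x(1)] subgroup.one_closed[OF H] by simp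
    ultimately have PO: "P (K.ord x)" unfolding P_def by simp
    define m where "m = (LEAST m. P m)"
    have Pm: "P m" unfolding m_def by (rule LeastI[of P, OF PO])
    have minm: "\<And>k. k < m \<Longrightarrow> \<not> P k" unfolding m_def by (rule not_less_Least)
    have m0: "m > 0" and xmH: "x [^]\<^bsub>K\<^esub> m \<in> H" using Pm unfolding P_def by auto
    have "ch (x [^]\<^bsub>K\<^esub> m) \<in> carrier RU" by (rule sub_hom_carrier[OF ch xmH])
    then obtain a where a: "a \<in> carrier RU" "a ^ m = ch (x [^]\<^bsub>K\<^esub> m)"
      using RU_roots[OF m0] by blast
    have cond: "a ^ t = ch (x [^]\<^bsub>K\<^esub> t)" if t: "x [^]\<^bsub>K\<^esub> t \<in> H" for t :: nat
    proof -
      define q where "q = t div m"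
      define r where "r = t mod m"
      have tq: "t = m * q + r" unfolding q_def r_def by simp
      have rm: "r < m" unfolding r_def using m0 by simp
      have xmq: "x [^]\<^bsub>K\<^esub> (m * q) \<in> H"
        using sub_pow_closed[OF H xmH, of q] K.nat_pow_pow[OF x(1), of m q] by simp
      have "x [^]\<^bsub>K\<^esub> (m * q) \<otimes>\<^bsub>K\<^esub> x [^]\<^bsub>K\<^esub> r = x [^]\<^bsub>K\<^esub> t"
        unfolding tq by (rule K.nat_pow_mult[OF x(1)])
      then have "x [^]\<^bsub>K\<^esub> r = inv\<^bsub>K\<^esub> (x [^]\<^bsub>K\<^esub> (m * q)) \<otimes>\<^bsub>K\<^esub> x [^]\<^bsub>K\<^esub> t"
        using K.inv_solve_left[OF K.nat_pow_closed[OF x(1)] K.nat_pow_closed[OF x(1)] K.nat_pow_closed[OF x(1)], of r "m * q" t]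
        by simp
      then have "x [^]\<^bsub>K\<^esub> r \<in> H"
        using subgroup.m_closed[OF H subgroup.m_inv_closed[OF H xmq] t] by simp
      then have "r = 0" using minm[OF rm] unfolding P_def by auto
      then have t2: "t = m * q" using tq by simp
      have "a ^ t = ch (x [^]\<^bsub>K\<^esub> m) ^ q" unfolding t2 power_mult a(2) ..
      also have "\<dots> = ch ((x [^]\<^bsub>K\<^esub> m) [^]\<^bsub>K\<^esub> q)"
        by (rule hom_pow_RU[OF K.is_group H ch xmH, symmetric])
      also have "\<dots> = ch (x [^]\<^bsub>K\<^esub> t)" unfolding t2 K.nat_pow_pow[OF x(1)] ..
      finally show ?thesis .
    qed
    obtain H' ch' where st: "subgroup H' K" "H \<subseteq> H'" "x \<in> H'" "ch' \<in> hom (K\<lparr>carrier := H'\<rparr>) RU"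
      "\<forall>h\<in>H. ch' h = ch h" "ch' x = a"
      using ext_step[OF K H ch x(1) a(1) cond] by blast
    have "carrier K - H' \<subset> carrier K - H" using st(2,3) x by blast
    then have "card (carrier K - H') < card (carrier K - H)"
      by (rule psubset_card_mono[rotated]) (use K(2) in simp)
    then obtain ch'' where "ch'' \<in> hom K RU" "\<forall>h\<in>H'. ch'' h = ch' h"
      using less.hyps st(1,4) by blast
    then show ?thesis using st(2,5) by (metis subsetD)
  qed
qed

lemma char_exists:
  assumes K: "comm_group K" "finite (carrier K)" and z: "z \<in> carrier K" "z \<noteq> \<one>\<^bsub>K\<^esub>"
  shows "\<exists>ch\<in>hom K RU. ch z \<noteq> 1"
proof -
  interpret K: comm_group K by fact
  define m where "m = K.ord z"
  have m1: "m \<ge> 1" unfolding m_def by (rule K.ord_ge_1[OF K(2) z(1)])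
  have "m \<noteq> 1"
  proof
    assume "m = 1"
    then have "z [^]\<^bsub>K\<^esub> (1::nat) = \<one>\<^bsub>K\<^esub>" using K.pow_ord_eq_1[OF z(1)] unfolding m_def by simp
    then show False using z by simp
  qed
  with m1 have m2: "m > 1" by simp
  define a where "a = exp (2 * of_real pi * \<i> * of_nat 1 / of_nat m)"
  have apow: "a ^ t = exp (2 * of_real pi * \<i> * of_nat t / of_nat m)" for t :: nat
  proof -
    have "a ^ t = exp (of_nat t * (2 * of_real pi * \<i> * of_nat 1 / of_nat m))"
      unfolding a_def by (rule exp_of_nat_mult[symmetric])
    also have "of_nat t * (2 * of_real pi * \<i> * of_nat 1 / of_nat m) = (2 * of_real pi * \<i> * of_nat t / of_nat m :: complex)"
      by simp
    finally show ?thesis .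
  qed
  have apow1: "a ^ t = 1 \<longleftrightarrow> m dvd t" for t :: nat
    unfolding apow using complex_root_unity_eq_1[OF m1] .
  have a1: "a \<noteq> 1" using apow1[of 1] m2 by simp
  have aRU: "a \<in> carrier RU" using apow1[of m] m1 by (intro RU_closed[of a m]) auto
  define ch0 where "ch0 = (\<lambda>y::'a. (1::complex))"
  have H: "subgroup {\<one>\<^bsub>K\<^esub>} K" by (rule K.triv_subgroup)
  have one_RU: "(1::complex) \<in> carrier RU" unfolding RU_simps by (intro CollectI exI[of _ "1::nat"]) simp
  have ch0: "ch0 \<in> hom (K\<lparr>carrier := {\<one>\<^bsub>K\<^esub>}\<rparr>) RU"
  proof (rule homI)
    fix y show "ch0 y \<in> carrier RU" unfolding ch0_def by (rule one_RU)
  next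
    fix y w show "ch0 (y \<otimes>\<^bsub>K\<lparr>carrier := {\<one>\<^bsub>K\<^esub>}\<rparr>\<^esub> w) = ch0 y \<otimes>\<^bsub>RU\<^esub> ch0 w"
      unfolding ch0_def by simp
  qed
  have cond: "a ^ t = ch0 (z [^]\<^bsub>K\<^esub> t)" if "z [^]\<^bsub>K\<^esub> t \<in> {\<one>\<^bsub>K\<^esub>}" for t :: nat
  proof -
    have "z [^]\<^bsub>K\<^esub> t = \<one>\<^bsub>K\<^esub>" using that by simp
    then have "m dvd t" unfolding m_def using K.pow_eq_id[OF z(1)] by simp
    then show ?thesis using apow1 unfolding ch0_def by simp
  qed
  obtain H' ch' where st: "subgroup H' K" "ch' \<in> hom (K\<lparr>carrier := H'\<rparr>) RU" "ch' z = a" "z \<in> H'"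
    using ext_step[OF K H ch0 z(1) aRU cond] by blast
  obtain ch'' where "ch'' \<in> hom K RU" "\<forall>h\<in>H'. ch'' h = ch' h"
    using ext_full[OF K st(1,2)] by blast
  then show ?thesis using st(3,4) a1 by (intro bexI[of _ ch'']) auto
qed

lemma center_subgroup:
  assumes "group G" shows "subgroup (group_center G) G"
proof -
  interpret G: group G by fact
  show ?thesis
  proof (rule G.subgroupI)
    show "group_center G \<subseteq> carrier G" unfolding group_center_def by blast
    have "\<one>\<^bsub>G\<^esub> \<in> group_center G" unfolding group_center_def by simp
    then show "group_center G \<noteq> {}" by blast
  next
    fix a assume a: "a \<in> group_center G"
    then have aG: "a \<in> carrier G" and ac: "\<And>g. g \<in> carrier G \<Longrightarrow> a \<otimes>\<^bsub>G\<^esub> g = g \<otimes>\<^bsub>G\<^esub> a"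
      unfolding group_center_def by auto
    have "inv\<^bsub>G\<^esub> a \<otimes>\<^bsub>G\<^esub> g = g \<otimes>\<^bsub>G\<^esub> inv\<^bsub>G\<^esub> a" if g: "g \<in> carrier G" for g
    proof -
      have "inv\<^bsub>G\<^esub> a \<otimes>\<^bsub>G\<^esub> g = inv\<^bsub>G\<^esub> a \<otimes>\<^bsub>G\<^esub> ((g \<otimes>\<^bsub>G\<^esub> a) \<otimes>\<^bsub>G\<^esub> inv\<^bsub>G\<^esub> a)"
        using aG g by (simp add: G.m_assoc)
      also have "\<dots> = inv\<^bsub>G\<^esub> a \<otimes>\<^bsub>G\<^esub> ((a \<otimes>\<^bsub>G\<^esub> g) \<otimes>\<^bsub>G\<^esub> inv\<^bsub>G\<^esub> a)"
        unfolding ac[OF g] ..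
      also have "\<dots> = g \<otimes>\<^bsub>G\<^esub> inv\<^bsub>G\<^esub> a"
        using aG g by (simp add: G.m_assoc[symmetric])
      finally show ?thesis .
    qed
    then show "inv\<^bsub>G\<^esub> a \<in> group_center G" unfolding group_center_def using aG by simp
  next
    fix a b assume "a \<in> group_center G" "b \<in> group_center G"
    then have aG: "a \<in> carrier G" and ac: "\<And>g. g \<in> carrier G \<Longrightarrow> a \<otimes>\<^bsub>G\<^esub> g = g \<otimes>\<^bsub>G\<^esub> a"
      and bG: "b \<in> carrier G" and bc: "\<And>g. g \<in> carrier G \<Longrightarrow> b \<otimes>\<^bsub>G\<^esub> g = g \<otimes>\<^bsub>G\<^esub> b"
      unfolding group_center_def by auto
    have "(a \<otimes>\<^bsub>G\<^esub> b) \<otimes>\<^bsub>G\<^esub> g = g \<otimes>\<^bsub>G\<^esub> (a \<otimes>\<^bsub>G\<^esub> b)" if g: "g \<in> carrier G" for g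
    proof -
      have "(a \<otimes>\<^bsub>G\<^esub> b) \<otimes>\<^bsub>G\<^esub> g = a \<otimes>\<^bsub>G\<^esub> (b \<otimes>\<^bsub>G\<^esub> g)" by (rule G.m_assoc[OF aG bG g])
      also have "\<dots> = a \<otimes>\<^bsub>G\<^esub> (g \<otimes>\<^bsub>G\<^esub> b)" unfolding bc[OF g] ..
      also have "\<dots> = (a \<otimes>\<^bsub>G\<^esub> g) \<otimes>\<^bsub>G\<^esub> b" by (rule G.m_assoc[OF aG g bG, symmetric])
      also have "\<dots> = (g \<otimes>\<^bsub>G\<^esub> a) \<otimes>\<^bsub>G\<^esub> b" unfolding ac[OF g] ..
      also have "\<dots> = g \<otimes>\<^bsub>G\<^esub> (a \<otimes>\<^bsub>G\<^esub> b)" by (rule G.m_assoc[OF g aG bG])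
      finally show ?thesis .
    qed
    then show "a \<otimes>\<^bsub>G\<^esub> b \<in> group_center G" unfolding group_center_def using G.m_closed[OF aG bG] by simp
  qed
qed

lemma center_comm_group:
  assumes "group G" shows "comm_group (G\<lparr>carrier := group_center G\<rparr>)"
proof -
  have g: "group (G\<lparr>carrier := group_center G\<rparr>)"
    by (rule group.subgroup_imp_group[OF assms center_subgroup[OF assms]])
  show ?thesis
  proof (rule group.group_comm_groupI[OF g])
    fix x y assume "x \<in> carrier (G\<lparr>carrier := group_center G\<rparr>)" "y \<in> carrier (G\<lparr>carrier := group_center G\<rparr>)"
    then have "x \<in> group_center G" "y \<in> carrier G" unfolding group_center_def by auto
    then show "x \<otimes>\<^bsub>G\<lparr>carrier := group_center G\<rparr>\<^esub> y = y \<otimes>\<^bsub>G\<lparr>carrier := group_center G\<rparr>\<^esub> x"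
      unfolding group_center_def by simp
  qed
qed

lemma central_hom:
  assumes G: "group G" and beta: "\<beta> \<in> hom G G"
    and pq: "\<And>u. u \<in> U \<Longrightarrow> p u \<in> carrier G \<and> q u \<in> carrier G"
    and pm: "\<And>u v. u \<in> U \<Longrightarrow> v \<in> U \<Longrightarrow> p (u \<otimes>\<^bsub>G \<times>\<times> G\<^esub> v) = p u \<otimes>\<^bsub>G\<^esub> p v"
    and qm: "\<And>u v. u \<in> U \<Longrightarrow> v \<in> U \<Longrightarrow> q (u \<otimes>\<^bsub>G \<times>\<times> G\<^esub> v) = q u \<otimes>\<^bsub>G\<^esub> q v"
    and cen: "\<And>u. u \<in> U \<Longrightarrow> p u \<otimes>\<^bsub>G\<^esub> inv\<^bsub>G\<^esub> (\<beta> (q u)) \<in> group_center G"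
  shows "(\<lambda>u. p u \<otimes>\<^bsub>G\<^esub> inv\<^bsub>G\<^esub> (\<beta> (q u))) \<in> hom ((G \<times>\<times> G)\<lparr>carrier := U\<rparr>) (G\<lparr>carrier := group_center G\<rparr>)"
proof (rule homI)
  interpret G: group G by fact
  fix u assume "u \<in> carrier ((G \<times>\<times> G)\<lparr>carrier := U\<rparr>)"
  then have "u \<in> U" by simp
  then show "p u \<otimes>\<^bsub>G\<^esub> inv\<^bsub>G\<^esub> (\<beta> (q u)) \<in> carrier (G\<lparr>carrier := group_center G\<rparr>)"
    using cen by simp
next
  interpret G: group G by fact
  fix u v assume "u \<in> carrier ((G \<times>\<times> G)\<lparr>carrier := U\<rparr>)" "v \<in> carrier ((G \<times>\<times> G)\<lparr>carrier := U\<rparr>)"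
  then have u: "u \<in> U" and v: "v \<in> U" by simp_all
  define P where "P = p u"
  define Q where "Q = p v"
  define A where "A = \<beta> (q u)"
  define B where "B = \<beta> (q v)"
  have PG: "P \<in> carrier G" and QG: "Q \<in> carrier G" unfolding P_def Q_def using pq u v by auto
  have AG: "A \<in> carrier G" and BG: "B \<in> carrier G"
    unfolding A_def B_def using pq u v hom_in_carrier[OF beta] by auto
  have c: "Q \<otimes>\<^bsub>G\<^esub> inv\<^bsub>G\<^esub> B \<in> group_center G" unfolding Q_def B_def by (rule cen[OF v])
  then have cc: "(Q \<otimes>\<^bsub>G\<^esub> inv\<^bsub>G\<^esub> B) \<otimes>\<^bsub>G\<^esub> inv\<^bsub>G\<^esub> A = inv\<^bsub>G\<^esub> A \<otimes>\<^bsub>G\<^esub> (Q \<otimes>\<^bsub>G\<^esub> inv\<^bsub>G\<^esub> B)"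
    unfolding group_center_def using G.inv_closed[OF AG] by blast
  have "\<beta> (q (u \<otimes>\<^bsub>G \<times>\<times> G\<^esub> v)) = A \<otimes>\<^bsub>G\<^esub> B"
    unfolding qm[OF u v] A_def B_def using hom_mult[OF beta] pq u v by blast
  then have "p (u \<otimes>\<^bsub>G \<times>\<times> G\<^esub> v) \<otimes>\<^bsub>G\<^esub> inv\<^bsub>G\<^esub> (\<beta> (q (u \<otimes>\<^bsub>G \<times>\<times> G\<^esub> v)))
      = (P \<otimes>\<^bsub>G\<^esub> Q) \<otimes>\<^bsub>G\<^esub> (inv\<^bsub>G\<^esub> B \<otimes>\<^bsub>G\<^esub> inv\<^bsub>G\<^esub> A)"
    unfolding pm[OF u v] P_def[symmetric] Q_def[symmetric] using G.inv_mult_group[OF AG BG] by simp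
  also have "\<dots> = P \<otimes>\<^bsub>G\<^esub> ((Q \<otimes>\<^bsub>G\<^esub> inv\<^bsub>G\<^esub> B) \<otimes>\<^bsub>G\<^esub> inv\<^bsub>G\<^esub> A)"
    using PG QG AG BG by (simp add: G.m_assoc)
  also have "\<dots> = P \<otimes>\<^bsub>G\<^esub> (inv\<^bsub>G\<^esub> A \<otimes>\<^bsub>G\<^esub> (Q \<otimes>\<^bsub>G\<^esub> inv\<^bsub>G\<^esub> B))" unfolding cc ..
  also have "\<dots> = (P \<otimes>\<^bsub>G\<^esub> inv\<^bsub>G\<^esub> A) \<otimes>\<^bsub>G\<^esub> (Q \<otimes>\<^bsub>G\<^esub> inv\<^bsub>G\<^esub> B)"
    using PG QG AG BG by (simp add: G.m_assoc)
  finally show "p (u \<otimes>\<^bsub>(G \<times>\<times> G)\<lparr>carrier := U\<rparr>\<^esub> v) \<otimes>\<^bsub>G\<^esub> inv\<^bsub>G\<^esub> (\<beta> (q (u \<otimes>\<^bsub>(G \<times>\<times> G)\<lparr>carrier := U\<rparr>\<^esub> v)))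
     = (p u \<otimes>\<^bsub>G\<^esub> inv\<^bsub>G\<^esub> (\<beta> (q u))) \<otimes>\<^bsub>G\<lparr>carrier := group_center G\<rparr>\<^esub> (p v \<otimes>\<^bsub>G\<^esub> inv\<^bsub>G\<^esub> (\<beta> (q v)))"
    unfolding P_def Q_def A_def B_def by simp
qed

lemma kill_derived:
  assumes G: "group G" and F: "F \<in> hom G RU" and z: "z \<in> derived G (carrier G)"
  shows "F z = 1"
proof -
  have RUg: "group RU" using RU_comm_group unfolding comm_group_def by blast
  have gh: "group_hom G RU F" unfolding group_hom_def group_hom_axioms_def using G RUg F by blast
  have "derived RU (F ` carrier G) = F ` derived G (carrier G)"
    by (rule group_hom.derived_img[OF gh]) simp
  moreover have "derived RU (F ` carrier G) = {\<one>\<^bsub>RU\<^esub>}"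
    by (rule comm_group.derived_eq_singleton[OF RU_comm_group hom_carrier[OF F]])
  ultimately have "F z \<in> {\<one>\<^bsub>RU\<^esub>}" using z by blast
  then show ?thesis by simp
qed

lemma not_ext_generic:
  assumes G: "group G" "finite (carrier G)"
    and f0: "f0 \<in> hom ((G \<times>\<times> G)\<lparr>carrier := U\<rparr>) (G\<lparr>carrier := group_center G\<rparr>)"
    and w: "w \<in> U" "f0 w \<noteq> \<one>\<^bsub>G\<^esub>"
    and kill: "\<And>F. F \<in> hom (G \<times>\<times> G) RU \<Longrightarrow> F w = 1"
  shows "\<not> A_extensible G U RU"
proof
  assume ext: "A_extensible G U RU"
  define K where "K = G\<lparr>carrier := group_center G\<rparr>"
  have K: "comm_group K" unfolding K_def by (rule center_comm_group[OF G(1)])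
  have Kf: "finite (carrier K)" unfolding K_def group_center_def using G(2) by simp
  have wK: "f0 w \<in> carrier K" unfolding K_def by (rule hom_in_carrier[OF f0]) (use w in simp)
  have w1: "f0 w \<noteq> \<one>\<^bsub>K\<^esub>" unfolding K_def using w(2) by simp
  obtain ch where ch: "ch \<in> hom K RU" "ch (f0 w) \<noteq> 1" using char_exists[OF K Kf wK w1] by blast
  have "ch \<circ> f0 \<in> hom ((G \<times>\<times> G)\<lparr>carrier := U\<rparr>) RU"
    by (rule hom_compose[OF f0 ch(1)[unfolded K_def]])
  then obtain F where F: "F \<in> hom (G \<times>\<times> G) RU" "\<forall>u\<in>U. F u = (ch \<circ> f0) u"
    using ext unfolding A_extensible_def by blast
  have "F w = ch (f0 w)" using F(2) w(1) by simp
  with kill[OF F(1)] ch(2) show False by simp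
qed

lemma kill1:
  assumes G: "group G" and F: "F \<in> hom (G \<times>\<times> G) RU" and z: "z \<in> derived G (carrier G)"
  shows "F (z, \<one>\<^bsub>G\<^esub>) = 1"
proof -
  interpret G: group G by fact
  have "(\<lambda>g. F (g, \<one>\<^bsub>G\<^esub>)) \<in> hom G RU"
  proof (rule homI)
    fix g assume "g \<in> carrier G"
    then show "F (g, \<one>\<^bsub>G\<^esub>) \<in> carrier RU" using hom_in_carrier[OF F] by simp
  next
    fix g h assume g: "g \<in> carrier G" and h: "h \<in> carrier G"
    have "F ((g, \<one>\<^bsub>G\<^esub>) \<otimes>\<^bsub>G \<times>\<times> G\<^esub> (h, \<one>\<^bsub>G\<^esub>)) = F (g, \<one>\<^bsub>G\<^esub>) \<otimes>\<^bsub>RU\<^esub> F (h, \<one>\<^bsub>G\<^esub>)"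
      by (rule hom_mult[OF F]) (use g h in simp_all)
    then show "F (g \<otimes>\<^bsub>G\<^esub> h, \<one>\<^bsub>G\<^esub>) = F (g, \<one>\<^bsub>G\<^esub>) \<otimes>\<^bsub>RU\<^esub> F (h, \<one>\<^bsub>G\<^esub>)" by simp
  qed
  from kill_derived[OF G this z] show ?thesis .
qed

lemma kill2:
  assumes G: "group G" and F: "F \<in> hom (G \<times>\<times> G) RU" and z: "z \<in> derived G (carrier G)"
  shows "F (\<one>\<^bsub>G\<^esub>, z) = 1"
proof -
  interpret G: group G by fact
  have "(\<lambda>g. F (\<one>\<^bsub>G\<^esub>, g)) \<in> hom G RU"
  proof (rule homI)
    fix g assume "g \<in> carrier G"
    then show "F (\<one>\<^bsub>G\<^esub>, g) \<in> carrier RU" using hom_in_carrier[OF F] by simp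
  next
    fix g h assume g: "g \<in> carrier G" and h: "h \<in> carrier G"
    have "F ((\<one>\<^bsub>G\<^esub>, g) \<otimes>\<^bsub>G \<times>\<times> G\<^esub> (\<one>\<^bsub>G\<^esub>, h)) = F (\<one>\<^bsub>G\<^esub>, g) \<otimes>\<^bsub>RU\<^esub> F (\<one>\<^bsub>G\<^esub>, h)"
      by (rule hom_mult[OF F]) (use g h in simp_all)
    then show "F (\<one>\<^bsub>G\<^esub>, g \<otimes>\<^bsub>G\<^esub> h) = F (\<one>\<^bsub>G\<^esub>, g) \<otimes>\<^bsub>RU\<^esub> F (\<one>\<^bsub>G\<^esub>, h)" by simp
  qed
  from kill_derived[OF G this z] show ?thesis .
qed

lemma derived_one: "group G \<Longrightarrow> \<one>\<^bsub>G\<^esub> \<in> derived G (carrier G)"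
  using group.derived_is_subgroup[of G "carrier G"] subgroup.one_closed by blast

lemma pick_nontriv:
  assumes "S \<noteq> {\<one>\<^bsub>G\<^esub>}" "\<one>\<^bsub>G\<^esub> \<in> S" shows "\<exists>z\<in>S. z \<noteq> \<one>\<^bsub>G\<^esub>"
  using assms by blast

lemma ext_imp_RU: "extensible TYPE(complex) G U \<Longrightarrow> A_extensible G U RU"
  unfolding extensible_def using RU_comm_group RU_hyp by blast

theorem corollary5p3:
  fixes G :: "('a, 'b) monoid_scheme" and \<phi> :: "'a \<Rightarrow> 'a" and U :: "('a \<times> 'a) set"
  assumes "group G" and "finite (carrier G)"
    and "\<phi> \<in> iso G G"
    and "subgroup U (G \<times>\<times> G)"
    and "twisted_diag G \<phi> \<subseteq> U"
    and "(k1 G U \<inter> derived G (carrier G) \<noteq> {\<one>\<^bsub>G\<^esub>} \<and> k1 G U \<subseteq> group_center G) \<or>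
         (k2 G U \<inter> derived G (carrier G) \<noteq> {\<one>\<^bsub>G\<^esub>} \<and> k2 G U \<subseteq> group_center G)"
  shows "\<not> extensible TYPE(complex) G U"
proof -
  interpret G: group G by fact
  have GG: "group (G \<times>\<times> G)" by (rule DirProd_group[OF assms(1) assms(1)])
  have Usub: "\<And>u. u \<in> U \<Longrightarrow> fst u \<in> carrier G \<and> snd u \<in> carrier G"
    using subgroup.subset[OF assms(4)] by auto
  have Umul: "\<And>u v. u \<in> U \<Longrightarrow> v \<in> U \<Longrightarrow> u \<otimes>\<^bsub>G \<times>\<times> G\<^esub> v \<in> U"
    using subgroup.m_closed[OF assms(4)] by blast
  have Uinv: "\<And>u. u \<in> U \<Longrightarrow> inv\<^bsub>G \<times>\<times> G\<^esub> u \<in> U"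
    using subgroup.m_inv_closed[OF assms(4)] by blast
  have one11: "(\<one>\<^bsub>G\<^esub>, \<one>\<^bsub>G\<^esub>) \<in> U" using subgroup.one_closed[OF assms(4)] by simp
  have fstm: "\<And>u v. fst (u \<otimes>\<^bsub>G \<times>\<times> G\<^esub> v) = fst u \<otimes>\<^bsub>G\<^esub> fst v" by (simp add: mult_DirProd')
  have sndm: "\<And>u v. snd (u \<otimes>\<^bsub>G \<times>\<times> G\<^esub> v) = snd u \<otimes>\<^bsub>G\<^esub> snd v" by (simp add: mult_DirProd')
  have phom: "\<phi> \<in> hom G G" using assms(3) by (rule iso_imp_homomorphism)
  have diag: "\<And>g. g \<in> carrier G \<Longrightarrow> (g, \<phi> g) \<in> U" using assms(5) unfolding twisted_diag_def by blast
  have "\<not> A_extensible G U RU"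
    using assms(6)
  proof
    assume c1: "k1 G U \<inter> derived G (carrier G) \<noteq> {\<one>\<^bsub>G\<^esub>} \<and> k1 G U \<subseteq> group_center G"
    define \<psi> where "\<psi> = inv_into (carrier G) \<phi>"
    have psiiso: "\<psi> \<in> iso G G" unfolding \<psi>_def by (rule G.iso_set_sym[OF assms(3)])
    have psihom: "\<psi> \<in> hom G G" using psiiso by (rule iso_imp_homomorphism)
    have phisurj: "\<phi> ` carrier G = carrier G" using assms(3) unfolding iso_iff by blast
    have phipsi: "\<phi> (\<psi> h) = h" if "h \<in> carrier G" for h
      unfolding \<psi>_def by (rule f_inv_into_f) (use that phisurj in simp)
    have psiG: "\<And>h. h \<in> carrier G \<Longrightarrow> \<psi> h \<in> carrier G" using hom_in_carrier[OF psihom] by blast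
    have cen: "fst u \<otimes>\<^bsub>G\<^esub> inv\<^bsub>G\<^esub> (\<psi> (snd u)) \<in> group_center G" if u: "u \<in> U" for u
    proof -
      obtain g h where gh: "u = (g, h)" by (cases u)
      have g: "g \<in> carrier G" and h: "h \<in> carrier G" using Usub[OF u] gh by auto
      have "(\<psi> h, h) \<in> U" using diag[OF psiG[OF h]] phipsi[OF h] by simp
      then have "inv\<^bsub>G \<times>\<times> G\<^esub> (\<psi> h, h) \<in> U" by (rule Uinv)
      then have "(inv\<^bsub>G\<^esub> (\<psi> h), inv\<^bsub>G\<^esub> h) \<in> U"
        using inv_DirProd[OF assms(1) assms(1) psiG[OF h] h] by simp
      then have "(g, h) \<otimes>\<^bsub>G \<times>\<times> G\<^esub> (inv\<^bsub>G\<^esub> (\<psi> h), inv\<^bsub>G\<^esub> h) \<in> U" using Umul u gh by blast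
      then have "(g \<otimes>\<^bsub>G\<^esub> inv\<^bsub>G\<^esub> (\<psi> h), \<one>\<^bsub>G\<^esub>) \<in> U" using h by simp
      then have "g \<otimes>\<^bsub>G\<^esub> inv\<^bsub>G\<^esub> (\<psi> h) \<in> k1 G U" unfolding k1_def using g psiG[OF h] by simp
      then show ?thesis using c1 gh by auto
    qed
    have f0: "(\<lambda>u. fst u \<otimes>\<^bsub>G\<^esub> inv\<^bsub>G\<^esub> (\<psi> (snd u))) \<in> hom ((G \<times>\<times> G)\<lparr>carrier := U\<rparr>) (G\<lparr>carrier := group_center G\<rparr>)"
      by (rule central_hom[OF assms(1) psihom Usub fstm sndm cen])
    have "\<one>\<^bsub>G\<^esub> \<in> k1 G U \<inter> derived G (carrier G)"
      using one11 derived_one[OF assms(1)] unfolding k1_def by simp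
    then obtain z where z: "z \<in> k1 G U" "z \<in> derived G (carrier G)" "z \<noteq> \<one>\<^bsub>G\<^esub>"
      using c1 pick_nontriv[of "k1 G U \<inter> derived G (carrier G)" G] by blast
    have zG: "z \<in> carrier G" and zU: "(z, \<one>\<^bsub>G\<^esub>) \<in> U" using z(1) unfolding k1_def by auto
    have gh: "group_hom G G \<psi>" unfolding group_hom_def group_hom_axioms_def using assms(1) psihom by blast
    have "\<psi> \<one>\<^bsub>G\<^esub> = \<one>\<^bsub>G\<^esub>" by (rule group_hom.hom_one[OF gh])
    then have fw: "fst (z, \<one>\<^bsub>G\<^esub>) \<otimes>\<^bsub>G\<^esub> inv\<^bsub>G\<^esub> (\<psi> (snd (z, \<one>\<^bsub>G\<^esub>))) \<noteq> \<one>\<^bsub>G\<^esub>"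
      using zG z(3) by simp
    show ?thesis
    proof (rule not_ext_generic[OF assms(1,2) f0 zU])
      show "(\<lambda>u. fst u \<otimes>\<^bsub>G\<^esub> inv\<^bsub>G\<^esub> (\<psi> (snd u))) (z, \<one>\<^bsub>G\<^esub>) \<noteq> \<one>\<^bsub>G\<^esub>" using fw by (simp only: not_False_eq_True)
    next
      fix F assume "F \<in> hom (G \<times>\<times> G) RU"
      then show "F (z, \<one>\<^bsub>G\<^esub>) = 1" by (rule kill1[OF assms(1) _ z(2)])
    qed
  next
    assume c2: "k2 G U \<inter> derived G (carrier G) \<noteq> {\<one>\<^bsub>G\<^esub>} \<and> k2 G U \<subseteq> group_center G"
    have phiG: "\<And>h. h \<in> carrier G \<Longrightarrow> \<phi> h \<in> carrier G" using hom_in_carrier[OF phom] by blast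
    have Usub2: "\<And>u. u \<in> U \<Longrightarrow> snd u \<in> carrier G \<and> fst u \<in> carrier G" using Usub by blast
    have cen: "snd u \<otimes>\<^bsub>G\<^esub> inv\<^bsub>G\<^esub> (\<phi> (fst u)) \<in> group_center G" if u: "u \<in> U" for u
    proof -
      obtain g h where gh: "u = (g, h)" by (cases u)
      have g: "g \<in> carrier G" and h: "h \<in> carrier G" using Usub[OF u] gh by auto
      have "(g, \<phi> g) \<in> U" by (rule diag[OF g])
      then have "inv\<^bsub>G \<times>\<times> G\<^esub> (g, \<phi> g) \<in> U" by (rule Uinv)
      then have "(inv\<^bsub>G\<^esub> g, inv\<^bsub>G\<^esub> (\<phi> g)) \<in> U"
        using inv_DirProd[OF assms(1) assms(1) g phiG[OF g]] by simp
      then have "(g, h) \<otimes>\<^bsub>G \<times>\<times> G\<^esub> (inv\<^bsub>G\<^esub> g, inv\<^bsub>G\<^esub> (\<phi> g)) \<in> U" using Umul u gh by blast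
      then have "(\<one>\<^bsub>G\<^esub>, h \<otimes>\<^bsub>G\<^esub> inv\<^bsub>G\<^esub> (\<phi> g)) \<in> U" using g by simp
      then have "h \<otimes>\<^bsub>G\<^esub> inv\<^bsub>G\<^esub> (\<phi> g) \<in> k2 G U" unfolding k2_def using h phiG[OF g] by simp
      then show ?thesis using c2 gh by auto
    qed
    have f0: "(\<lambda>u. snd u \<otimes>\<^bsub>G\<^esub> inv\<^bsub>G\<^esub> (\<phi> (fst u))) \<in> hom ((G \<times>\<times> G)\<lparr>carrier := U\<rparr>) (G\<lparr>carrier := group_center G\<rparr>)"
      by (rule central_hom[OF assms(1) phom Usub2 sndm fstm cen])
    have "\<one>\<^bsub>G\<^esub> \<in> k2 G U \<inter> derived G (carrier G)"
      using one11 derived_one[OF assms(1)] unfolding k2_def by simp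
    then obtain z where z: "z \<in> k2 G U" "z \<in> derived G (carrier G)" "z \<noteq> \<one>\<^bsub>G\<^esub>"
      using c2 pick_nontriv[of "k2 G U \<inter> derived G (carrier G)" G] by blast
    have zG: "z \<in> carrier G" and zU: "(\<one>\<^bsub>G\<^esub>, z) \<in> U" using z(1) unfolding k2_def by auto
    have gh: "group_hom G G \<phi>" unfolding group_hom_def group_hom_axioms_def using assms(1) phom by blast
    have "\<phi> \<one>\<^bsub>G\<^esub> = \<one>\<^bsub>G\<^esub>" by (rule group_hom.hom_one[OF gh])
    then have fw: "snd (\<one>\<^bsub>G\<^esub>, z) \<otimes>\<^bsub>G\<^esub> inv\<^bsub>G\<^esub> (\<phi> (fst (\<one>\<^bsub>G\<^esub>, z))) \<noteq> \<one>\<^bsub>G\<^esub>"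
      using zG z(3) by simp
    show ?thesis
    proof (rule not_ext_generic[OF assms(1,2) f0 zU])
      show "(\<lambda>u. snd u \<otimes>\<^bsub>G\<^esub> inv\<^bsub>G\<^esub> (\<phi> (fst u))) (\<one>\<^bsub>G\<^esub>, z) \<noteq> \<one>\<^bsub>G\<^esub>" using fw by (simp only: not_False_eq_True)
    next
      fix F assume "F \<in> hom (G \<times>\<times> G) RU"
      then show "F (\<one>\<^bsub>G\<^esub>, z) = 1" by (rule kill2[OF assms(1) _ z(2)])
    qed
  qed
  then show ?thesis using ext_imp_RU by blast
qed

end
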